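(* Let $\beta\in[0,1)$ and let $u:\mathbb{T}_m\to\mathbb{R}$ satisfy $-\Delta_\beta u(x)\ge0$ for all $x\in\mathbb{T}_m$ and $\liminf_{x\to y}u(x)\ge0$ for every $y\in\partial\mathbb{T}_m$. Then $u(x)\ge0$ for all $x\in\mathbb{T}_m$. Moreover, if $\beta>0$, then either $u>0$ on $\mathbb{T}_m$ or $u\equiv0$ on $\mathbb{T}_m$.
   Context: Tree: for an integer $m\ge2$, $\mathbb{T}_m$ has vertices the root $\emptyset$ and all finite sequences $(\emptyset,a_1,\dots,a_k)$, $a_i\in\{0,\dots,m-1\}$; $|x|$ is the level, successors of $x$ are $(x,i)$, $\hat x$ is the immediate predecessor of $x\ne\emptyset$. A branch is an infinite sequence $(x_n)_{n\ge0}$ with $x_0=\emptyset$ and $x_{n+1}$ a successor of $x_n$; $\partial\mathbb{T}_m$ is the set of branches; for $y=(x_n)$, $\liminf_{x\to y}u(x)=\liminf_{n\to\infty}u(x_n)$. Operator: $p_\beta=1$ if $\beta=0$, $p_\beta=\beta/(1-\beta)$ if $\beta\in(0,1)$. $\Delta_\beta u(\emptyset)=\frac1m\sum_{i=0}^{m-1}u(\emptyset,i)-u(\emptyset)$ and, for $x\ne\emptyset$, $\Delta_\beta u(x)=\big(\beta u(\hat x)+\frac{1-\beta}{m}\sum_{i=0}^{m-1}u(x,i)-u(x)\big)p_\beta^{-|x|}$. *)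

theory Defs
  imports "HOL-Analysis.Analysis"
begin

text \<open>Vertices of the m-ary tree T_m: the vertex (root, a_1, ..., a_k) is encoded
  as the list [a_1, ..., a_k] with all a_i < m; the root is []. Its level is the length,
  its successors are x @ [i], its predecessor is butlast x.\<close>

definition tree_vertex :: "nat \<Rightarrow> nat list \<Rightarrow> bool" where
  "tree_vertex m x \<longleftrightarrow> (\<forall>a\<in>set x. a < m)"

definition p_beta :: "real \<Rightarrow> real" where
  "p_beta \<beta> = (if \<beta> = 0 then 1 else \<beta> / (1 - \<beta>))"

definition Delta_beta :: "nat \<Rightarrow> real \<Rightarrow> (nat list \<Rightarrow> real) \<Rightarrow> nat list \<Rightarrow> real" where
  "Delta_beta m \<beta> u x =
     (if x = [] then (\<Sum>i<m. u [i]) / real m - u []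
      else (\<beta> * u (butlast x) + (1 - \<beta>) / real m * (\<Sum>i<m. u (x @ [i])) - u x)
             * p_beta \<beta> powi (- int (length x)))"

text \<open>A branch is determined by its digit sequence f (with f n < m for all n);
  its n-th vertex is [f 0, ..., f (n-1)].\<close>

definition branch_vertex :: "(nat \<Rightarrow> nat) \<Rightarrow> nat \<Rightarrow> nat list" where
  "branch_vertex f n = map f [0..<n]"

end

theory Submission
  imports Defs
begin

lemma pb_pos: "0 \<le> \<beta> \<Longrightarrow> \<beta> < 1 \<Longrightarrow> p_beta \<beta> > 0"
  unfolding p_beta_def by auto

lemma ineq_nonroot:
  assumes "0 \<le> \<beta>" "\<beta> < 1" "- Delta_beta m \<beta> u x \<ge> 0" "x \<noteq> []"
  shows "\<beta> * u (butlast x) + (1 - \<beta>) / real m * (\<Sum>i<m. u (x @ [i])) \<le> u x"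
proof -
  have p: "p_beta \<beta> powi (- int (length x)) > 0" using pb_pos[OF assms(1,2)] by simp
  have "(\<beta> * u (butlast x) + (1 - \<beta>) / real m * (\<Sum>i<m. u (x @ [i])) - u x)
      * p_beta \<beta> powi (- int (length x)) \<le> 0"
    using assms(3,4) unfolding Delta_beta_def by simp
  then have "\<beta> * u (butlast x) + (1 - \<beta>) / real m * (\<Sum>i<m. u (x @ [i])) - u x \<le> 0"
    using p by (simp add: mult_le_0_iff)
  then show ?thesis by simp
qed

lemma ineq_root:
  assumes "- Delta_beta m \<beta> u [] \<ge> 0"
  shows "(\<Sum>i<m. u [i]) / real m \<le> u []"
  using assms unfolding Delta_beta_def by simp

lemma min_child:
  fixes g :: "nat \<Rightarrow> real"
  assumes "m > 0" "(\<Sum>i<m. g i) / real m \<le> c"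
  shows "\<exists>i<m. g i \<le> c"
proof (rule ccontr)
  assume "\<not> ?thesis"
  then have "\<forall>i\<in>{..<m}. c < g i" by auto
  then have "(\<Sum>i<m. c) < (\<Sum>i<m. g i)"
    using assms(1) by (intro sum_strict_mono) auto
  then have "real m * c < (\<Sum>i<m. g i)" by simp
  then have "c < (\<Sum>i<m. g i) / real m" using assms(1) by (simp add: field_simps)
  then show False using assms(2) by simp
qed

lemma branch_exists:
  fixes P :: "nat list \<Rightarrow> bool"
  assumes P0: "P y0" and step: "\<And>y. P y \<Longrightarrow> \<exists>i<m. P (y @ [i])"
    and tv: "\<And>y. P y \<Longrightarrow> tree_vertex m y"
  shows "\<exists>f. (\<forall>n. f n < m) \<and> (\<forall>k. P (branch_vertex f (length y0 + k)))"
proof -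
  define nx where "nx y = y @ [SOME i. i < m \<and> P (y @ [i])]" for y
  define Y where "Y k = (nx ^^ k) y0" for k
  have YS: "Y (Suc k) = nx (Y k)" for k unfolding Y_def by simp
  have PY: "P (Y k)" for k
  proof (induction k)
    case 0 then show ?case using P0 by (simp add: Y_def)
  next
    case (Suc k)
    then have "\<exists>i. i < m \<and> P (Y k @ [i])" using step by blast
    then have "P (Y k @ [SOME i. i < m \<and> P (Y k @ [i])])"
      by (rule someI2_ex) auto
    then show ?case by (simp add: YS nx_def)
  qed
  have LY: "length (Y k) = length y0 + k" for k
    by (induction k) (auto simp: Y_def nx_def)
  have pre: "Y k = take (length y0 + k) (Y (k + d))" for k d
  proof (induction d)
    case 0 then show ?case using LY by simp
  next
    case (Suc d)
    have "Y (k + Suc d) = Y (k + d) @ [SOME i. i < m \<and> P (Y (k + d) @ [i])]"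
      using YS[of "k+d"] by (simp add: nx_def)
    moreover have "length y0 + k \<le> length (Y (k + d))" using LY by simp
    ultimately show ?case using Suc by simp
  qed
  have nthY: "Y k ! i = Y j ! i" if "i < length y0 + k" "i < length y0 + j" for i j k
  proof -
    define M where "M = max k j"
    have "Y k = take (length y0 + k) (Y (k + (M - k)))" by (rule pre)
    moreover have "Y j = take (length y0 + j) (Y (j + (M - j)))" by (rule pre)
    moreover have "k + (M - k) = M" "j + (M - j) = M" unfolding M_def by auto
    ultimately show ?thesis using that by simp
  qed
  define f where "f n = Y (n + 1) ! n" for n
  have "f n < m" for n
  proof -
    have "tree_vertex m (Y (n+1))" using tv PY by blast
    moreover have "n < length (Y (n+1))" using LY by simp
    ultimately show ?thesis unfolding f_def tree_vertex_def using nth_mem by blast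
  qed
  moreover have "branch_vertex f (length y0 + k) = Y k" for k
  proof -
    have "map f [0..<length y0 + k] = Y k"
    proof (rule nth_equalityI)
      show "length (map f [0..<length y0 + k]) = length (Y k)" using LY by simp
    next
      fix i assume "i < length (map f [0..<length y0 + k])"
      then have i: "i < length y0 + k" by simp
      then have "map f [0..<length y0 + k] ! i = f i" by simp
      also have "\<dots> = Y k ! i" unfolding f_def using i by (intro nthY) auto
      finally show "map f [0..<length y0 + k] ! i = Y k ! i" .
    qed
    then show ?thesis by (simp add: branch_vertex_def)
  qed
  ultimately show ?thesis using PY by metis
qed

theorem theorem2p1:
  fixes m :: nat and \<beta> :: real and u :: "nat list \<Rightarrow> real"
  assumes "m \<ge> 2"
    and "0 \<le> \<beta>" and "\<beta> < 1"
    and "\<And>x. tree_vertex m x \<Longrightarrow> - Delta_beta m \<beta> u x \<ge> 0"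
    and "\<And>f. (\<forall>n. f n < m) \<Longrightarrow> liminf (\<lambda>n. ereal (u (branch_vertex f n))) \<ge> 0"
  shows "(\<forall>x. tree_vertex m x \<longrightarrow> u x \<ge> 0)
    \<and> (\<beta> > 0 \<longrightarrow> (\<forall>x. tree_vertex m x \<longrightarrow> u x > 0) \<or> (\<forall>x. tree_vertex m x \<longrightarrow> u x = 0))"
proof -
  have m0: "m > 0" using assms(1) by simp
  have tv_app: "tree_vertex m (x @ [i]) \<longleftrightarrow> tree_vertex m x \<and> i < m" for x i
    unfolding tree_vertex_def by auto
  have tv_butlast: "tree_vertex m x \<Longrightarrow> tree_vertex m (butlast x)" for x
    unfolding tree_vertex_def by (meson in_set_butlastD)
  have NR: "\<beta> * u (butlast x) + (1 - \<beta>) / real m * (\<Sum>i<m. u (x @ [i])) \<le> u x"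
    if "tree_vertex m x" "x \<noteq> []" for x
    using ineq_nonroot[OF assms(2,3) assms(4)[OF that(1)] that(2)] .
  have R: "(\<Sum>i<m. u [i]) / real m \<le> u []"
    using ineq_root[OF assms(4)] by (simp add: tree_vertex_def)
  have desc: "\<exists>i<m. u (y @ [i]) \<le> u y"
    if "tree_vertex m y" "y \<noteq> []" "u y \<le> u (butlast y)" for y
  proof -
    have a: "\<beta> * u (butlast y) + (1 - \<beta>) / real m * (\<Sum>i<m. u (y @ [i])) \<le> u y"
      using NR that by blast
    have "\<beta> * u y \<le> \<beta> * u (butlast y)" using that(3) assms(2) by (simp add: mult_left_mono)
    then have "(1 - \<beta>) * ((\<Sum>i<m. u (y @ [i])) / real m) \<le> (1 - \<beta>) * u y"
      using a by (simp add: algebra_simps)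
    then have "(\<Sum>i<m. u (y @ [i])) / real m \<le> u y" using assms(3)
      by (metis mult_le_cancel_left_pos diff_gt_0_iff_gt)
    then show ?thesis using min_child[OF m0] by blast
  qed
  have start: "tree_vertex m x \<Longrightarrow> u x < 0 \<Longrightarrow>
      \<exists>y. tree_vertex m y \<and> y \<noteq> [] \<and> u y \<le> u (butlast y) \<and> u y < 0" for x
  proof (induction x rule: rev_induct)
    case Nil
    obtain i where "i < m" "u [i] \<le> u []" using min_child[OF m0 R] by blast
    then show ?case using Nil by (intro exI[of _ "[i]"]) (auto simp: tree_vertex_def)
  next
    case (snoc a xs)
    show ?case
    proof (cases "u (xs @ [a]) \<le> u xs")
      case True then show ?thesis using snoc.prems by (intro exI[of _ "xs @ [a]"]) auto
    next
      case False then show ?thesis using snoc by (auto simp: tv_app)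
    qed
  qed
  have part1: "\<forall>x. tree_vertex m x \<longrightarrow> u x \<ge> 0"
  proof (rule ccontr)
    assume "\<not> ?thesis"
    then obtain x where "tree_vertex m x" "u x < 0" by force
    then obtain y0 where y0: "tree_vertex m y0" "y0 \<noteq> []" "u y0 \<le> u (butlast y0)" "u y0 < 0"
      using start by blast
    define P where "P y \<longleftrightarrow> tree_vertex m y \<and> y \<noteq> [] \<and> u y \<le> u (butlast y) \<and> u y \<le> u y0" for y
    have "P y0" using y0 by (simp add: P_def)
    moreover have "\<exists>i<m. P (y @ [i])" if Py: "P y" for y
    proof -
      obtain i where "i < m" "u (y @ [i]) \<le> u y" using desc Py by (auto simp: P_def)
      then show ?thesis using Py by (intro exI[of _ i]) (auto simp: P_def tv_app)
    qed
    moreover have "P y \<Longrightarrow> tree_vertex m y" for y by (simp add: P_def)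
    ultimately obtain f where f: "\<forall>n. f n < m" "\<forall>k. P (branch_vertex f (length y0 + k))"
      using branch_exists[of P y0 m] by blast
    have ev: "eventually (\<lambda>n. ereal (u (branch_vertex f n)) \<le> ereal (u y0)) sequentially"
      unfolding eventually_sequentially
    proof (intro exI allI impI)
      fix n assume "length y0 \<le> n"
      then have "P (branch_vertex f (length y0 + (n - length y0)))" using f by blast
      then show "ereal (u (branch_vertex f n)) \<le> ereal (u y0)"
        using \<open>length y0 \<le> n\<close> by (simp add: P_def)
    qed
    have "liminf (\<lambda>n. ereal (u (branch_vertex f n))) \<le> liminf (\<lambda>n. ereal (u y0))"
      by (rule Liminf_mono[OF ev])
    also have "\<dots> = ereal (u y0)" by (simp add: Liminf_const)
    finally have le: "liminf (\<lambda>n. ereal (u (branch_vertex f n))) \<le> ereal (u y0)" .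
    have "ereal (u y0) < 0" using y0(4) by (simp add: zero_ereal_def)
    with le have "liminf (\<lambda>n. ereal (u (branch_vertex f n))) < 0" by (rule order_le_less_trans)
    then show False using assms(5)[OF f(1)] by simp
  qed
  have part2: "(\<forall>x. tree_vertex m x \<longrightarrow> u x > 0) \<or> (\<forall>x. tree_vertex m x \<longrightarrow> u x = 0)"
    if bp: "\<beta> > 0"
  proof (cases "\<forall>x. tree_vertex m x \<longrightarrow> u x > 0")
    case True then show ?thesis by blast
  next
    case False
    then obtain x0 where x0: "tree_vertex m x0" "u x0 = 0"
      using part1 by force
    have sum_nn: "(\<Sum>i<m. u (x @ [i])) \<ge> 0" if "tree_vertex m x" for x
      using part1 that by (intro sum_nonneg) (auto simp: tv_app)
    have ch0: "\<forall>i<m. u (x @ [i]) = 0" if "tree_vertex m x" "u x = 0" for x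
    proof -
      have "(\<Sum>i<m. u (x @ [i])) / real m \<le> 0"
      proof (cases "x = []")
        case True then show ?thesis using R that by simp
      next
        case False
        have a: "\<beta> * u (butlast x) + (1 - \<beta>) / real m * (\<Sum>i<m. u (x @ [i])) \<le> 0"
          using NR[OF that(1) False] that(2) by simp
        have "\<beta> * u (butlast x) \<ge> 0" using part1 tv_butlast[OF that(1)] assms(2) by simp
        then have "(1 - \<beta>) * ((\<Sum>i<m. u (x @ [i])) / real m) \<le> 0" using a by simp
        then show ?thesis using assms(3)
          by (metis mult_le_cancel_left_pos diff_gt_0_iff_gt mult_zero_right)
      qed
      then have s: "(\<Sum>i<m. u (x @ [i])) = 0" using sum_nn[OF that(1)] m0
        by (simp add: divide_le_0_iff)
      have "\<forall>i\<in>{..<m}. u (x @ [i]) = 0"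
        using sum_nonneg_eq_0_iff[of "{..<m}" "\<lambda>i. u (x @ [i])"] s part1 that(1)
        by (auto simp: tv_app)
      then show ?thesis by simp
    qed
    have up: "u (butlast x) = 0" if "tree_vertex m x" "x \<noteq> []" "u x = 0" for x
    proof -
      have a: "\<beta> * u (butlast x) + (1 - \<beta>) / real m * (\<Sum>i<m. u (x @ [i])) \<le> 0"
        using NR[OF that(1,2)] that(3) by simp
      have "(1 - \<beta>) / real m * (\<Sum>i<m. u (x @ [i])) \<ge> 0"
        using sum_nn[OF that(1)] assms(3) by simp
      then have "\<beta> * u (butlast x) \<le> 0" using a by simp
      then have "u (butlast x) \<le> 0" using bp by (simp add: mult_le_0_iff)
      then show ?thesis using part1 tv_butlast[OF that(1)] by force
    qed
    have root0: "tree_vertex m x \<Longrightarrow> u x = 0 \<Longrightarrow> u [] = 0" for x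
    proof (induction x rule: rev_induct)
      case Nil then show ?case by simp
    next
      case (snoc a xs)
      have "u xs = 0" using up[OF snoc.prems(1) _ snoc.prems(2)] by simp
      then show ?case using snoc by (simp add: tv_app)
    qed
    have "u [] = 0" using root0[OF x0] .
    have "tree_vertex m x \<Longrightarrow> u x = 0" for x
    proof (induction x rule: rev_induct)
      case Nil then show ?case using \<open>u [] = 0\<close> by simp
    next
      case (snoc a xs)
      then show ?case using ch0[of xs] by (simp add: tv_app)
    qed
    then show ?thesis by blast
  qed
  show ?thesis using part1 part2 by blast
qed

end
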